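(* Let $\underline c<\overline c$ and $\underline s<\overline s$ be real numbers and write $\phi(c,s)=\sqrt{c^2+s^2}$. Suppose $$\phi(\overline c,\overline s)+\phi(\underline c,\underline s)-\phi(\overline c,\underline s)-\phi(\underline c,\overline s)>0.$$ Define $\eta^3=\frac{\phi(\overline c,\overline s)-\phi(\underline c,\overline s)}{\overline c-\underline c}$, $\delta^3=\frac{\phi(\underline c,\overline s)-\phi(\underline c,\underline s)}{\overline s-\underline s}$, $\nu^3=\phi(\underline c,\underline s)-\eta^3\underline c-\delta^3\underline s$, and $\eta^4=\frac{\phi(\overline c,\underline s)-\phi(\underline c,\underline s)}{\overline c-\underline c}$, $\delta^4=\frac{\phi(\overline c,\overline s)-\phi(\overline c,\underline s)}{\overline s-\underline s}$, $\nu^4=\phi(\overline c,\overline s)-\eta^4\overline c-\delta^4\overline s$. Then for $n=3,4$ and all $(c,s)\in[\underline c,\overline c]\times[\underline s,\overline s]$ we have $\nu^n+\eta^n c+\delta^n s\ge \sqrt{c^2+s^2}$. *)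

theory Defs
  imports Complex_Main
begin

definition phi :: "real \<Rightarrow> real \<Rightarrow> real" where
  "phi c s = sqrt (c\<^sup>2 + s\<^sup>2)"

end

theory Submission
  imports Defs
begin

lemma phi_cmod: "phi c s = cmod (Complex c s)"
  by (simp add: phi_def cmod_def)

lemma key:
  fixes cl cu sl su c s :: real
  assumes "cl < cu" "sl < su" "c \<in> {cl..cu}" "s \<in> {sl..su}"
  defines "a \<equiv> (c - cl) / (cu - cl)" and "b \<equiv> (s - sl) / (su - sl)"
  shows "sqrt (c\<^sup>2 + s\<^sup>2) \<le> (1-a)*(1-b) * phi cl sl + a*(1-b) * phi cu sl
            + (1-a)*b * phi cl su + a*b * phi cu su"
    and "0 \<le> a" "a \<le> 1" "0 \<le> b" "b \<le> 1"
    and "c = cl + a * (cu - cl)" "s = sl + b * (su - sl)"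
proof -
  show a0: "0 \<le> a" "a \<le> 1" "0 \<le> b" "b \<le> 1" using assms by (auto simp: a_def b_def field_simps)
  show ca: "c = cl + a * (cu - cl)" "s = sl + b * (su - sl)" using assms by (auto simp: a_def b_def field_simps)
  have eq: "Complex c s = of_real ((1-a)*(1-b)) * Complex cl sl + of_real (a*(1-b)) * Complex cu sl
     + of_real ((1-a)*b) * Complex cl su + of_real (a*b) * Complex cu su"
    by (rule complex_eqI) (simp_all add: ca algebra_simps)
  have "sqrt (c\<^sup>2 + s\<^sup>2) = cmod (Complex c s)" by (simp add: cmod_def)
  also have "\<dots> \<le> cmod (of_real ((1-a)*(1-b)) * Complex cl sl) + cmod (of_real (a*(1-b)) * Complex cu sl)
     + cmod (of_real ((1-a)*b) * Complex cl su) + cmod (of_real (a*b) * Complex cu su)"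
    unfolding eq by (meson norm_triangle_le order_refl add_mono)
  also have "\<dots> = (1-a)*(1-b) * phi cl sl + a*(1-b) * phi cu sl
            + (1-a)*b * phi cl su + a*b * phi cu su"
    using a0 by (simp only: phi_cmod norm_mult norm_of_real abs_of_nonneg mult_nonneg_nonneg diff_ge_0_iff_ge)
  finally show "sqrt (c\<^sup>2 + s\<^sup>2) \<le> (1-a)*(1-b) * phi cl sl + a*(1-b) * phi cu sl
            + (1-a)*b * phi cl su + a*b * phi cu su" .
qed

theorem proposition5:
  fixes cl cu sl su :: real
  assumes "cl < cu" and "sl < su"
    and "phi cu su + phi cl sl - phi cu sl - phi cl su > 0"
  defines "\<eta>3 \<equiv> (phi cu su - phi cl su) / (cu - cl)"
    and "\<delta>3 \<equiv> (phi cl su - phi cl sl) / (su - sl)"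
    and "\<nu>3 \<equiv> phi cl sl - (phi cu su - phi cl su) / (cu - cl) * cl - (phi cl su - phi cl sl) / (su - sl) * sl"
    and "\<eta>4 \<equiv> (phi cu sl - phi cl sl) / (cu - cl)"
    and "\<delta>4 \<equiv> (phi cu su - phi cu sl) / (su - sl)"
    and "\<nu>4 \<equiv> phi cu su - (phi cu sl - phi cl sl) / (cu - cl) * cu - (phi cu su - phi cu sl) / (su - sl) * su"
  shows "\<forall>c\<in>{cl..cu}. \<forall>s\<in>{sl..su}.
           \<nu>3 + \<eta>3 * c + \<delta>3 * s \<ge> sqrt (c\<^sup>2 + s\<^sup>2) \<and>
           \<nu>4 + \<eta>4 * c + \<delta>4 * s \<ge> sqrt (c\<^sup>2 + s\<^sup>2)"
proof (intro ballI)
  fix c s assume cs: "c \<in> {cl..cu}" "s \<in> {sl..su}"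
  define a where "a = (c - cl) / (cu - cl)"
  define b where "b = (s - sl) / (su - sl)"
  note k = key[OF assms(1,2) cs, folded a_def b_def]
  define P11 where "P11 = phi cl sl"
  define P12 where "P12 = phi cl su"
  define P21 where "P21 = phi cu sl"
  define P22 where "P22 = phi cu su"
  have h: "P11 + P22 - P12 - P21 > 0" using assms(3) by (simp add: P11_def P12_def P21_def P22_def)
  have t1: "\<eta>3*(c-cl) = a*(P22-P12)" unfolding \<eta>3_def a_def P22_def P12_def by simp
  have t2: "\<delta>3*(s-sl) = b*(P12-P11)" unfolding \<delta>3_def b_def P11_def P12_def by simp
  have t3: "\<eta>4*(c-cu) = -(1-a)*(P21-P11)" unfolding \<eta>4_def a_def P21_def P11_def using assms(1) by (simp add: field_simps)
  have t4: "\<delta>4*(s-su) = -(1-b)*(P22-P21)" unfolding \<delta>4_def b_def P22_def P21_def using assms(2) by (simp add: field_simps)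
  have L3: "\<nu>3 + \<eta>3 * c + \<delta>3 * s = P11 + a*(P22-P12) + b*(P12-P11)"
  proof -
    have "\<nu>3 = P11 - \<eta>3*cl - \<delta>3*sl" unfolding \<nu>3_def \<eta>3_def \<delta>3_def P11_def by simp
    thus ?thesis using t1 t2 by (simp add: algebra_simps)
  qed
  have L4: "\<nu>4 + \<eta>4 * c + \<delta>4 * s = P22 - (1-a)*(P21-P11) - (1-b)*(P22-P21)"
  proof -
    have "\<nu>4 = P22 - \<eta>4*cu - \<delta>4*su" unfolding \<nu>4_def \<eta>4_def \<delta>4_def P22_def by simp
    thus ?thesis using t3 t4 by (simp add: algebra_simps)
  qed
  have w1: "0 \<le> a*(1-b)" "0 \<le> (1-a)*b" using k(2-5) by simp_all
  have e3: "P11 + a*(P22-P12) + b*(P12-P11) - ((1-a)*(1-b) * P11 + a*(1-b) * P21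
            + (1-a)*b * P12 + a*b * P22) = a*(1-b)*(P11 + P22 - P12 - P21)"
    by (simp add: algebra_simps)
  have e4: "P22 - (1-a)*(P21-P11) - (1-b)*(P22-P21) - ((1-a)*(1-b) * P11 + a*(1-b) * P21
            + (1-a)*b * P12 + a*b * P22) = (1-a)*b*(P11 + P22 - P12 - P21)"
    by (simp add: algebra_simps)
  have m3: "0 \<le> a*(1-b)*(P11 + P22 - P12 - P21)" using w1 h by simp
  have m4: "0 \<le> (1-a)*b*(P11 + P22 - P12 - P21)" using w1 h by simp
  show "\<nu>3 + \<eta>3 * c + \<delta>3 * s \<ge> sqrt (c\<^sup>2 + s\<^sup>2) \<and>
           \<nu>4 + \<eta>4 * c + \<delta>4 * s \<ge> sqrt (c\<^sup>2 + s\<^sup>2)"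
    using k(1) L3 L4 e3 e4 m3 m4 unfolding P11_def P12_def P21_def P22_def by linarith
qed

end
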